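(* Let $T:V\to\mathfrak g$ be a relative Rota–Baxter operator on a Lie triple system $(\mathfrak g,[\cdot,\cdot,\cdot])$ with respect to a representation $(V;\rho)$. Then $$[u,v,w]_T=D(Tu,Tv)w+\rho(Tv,Tw)u-\rho(Tu,Tw)v\qquad(u,v,w\in V)$$ defines a Lie triple system structure on $V$, and $$\varrho(u,v)x=[x,Tu,Tv]-T\big(D(x,Tu)v-\rho(x,Tv)u\big)\qquad(x\in\mathfrak g,\ u,v\in V)$$ defines a representation $\varrho:\otimes^2V\to\mathfrak{gl}(\mathfrak g)$ of $(V,[\cdot,\cdot,\cdot]_T)$ on $\mathfrak g$.
   Context: All vector spaces are over a field of characteristic $0$. A Lie triple system is a vector space with a trilinear bracket satisfying $[x,x,y]=0$, $[x,y,z]+[y,z,x]+[z,x,y]=0$ and $[x,y,[z,w,t]]=[[x,y,z],w,t]+[z,[x,y,w],t]+[z,w,[x,y,t]]$. A representation of a Lie triple system $\mathfrak h$ on $W$ is a bilinear $\rho:\otimes^2\mathfrak h\to\mathfrak{gl}(W)$ with $D(a,b):=\rho(b,a)-\rho(a,b)$ such that $\rho(c,d)\rho(a,b)-\rho(b,d)\rho(a,c)-\rho(a,[b,c,d])+D(b,c)\rho(a,d)=0$ and $\rho([a,b,c],d)+\rho(c,[a,b,d])=[D(a,b),\rho(c,d)]$ for all $a,b,c,d\in\mathfrak h$. A relative Rota–Baxter operator on $\mathfrak g$ with respect to $(V;\rho)$ is a linear $T:V\to\mathfrak g$ with $[Tu,Tv,Tw]=T(D(Tu,Tv)w+\rho(Tv,Tw)u-\rho(Tu,Tw)v)$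 for all $u,v,w\in V$. *)

theory Defs
  imports Complex_Main
begin

definition trilinear ::
  "('k::field \<Rightarrow> 'v \<Rightarrow> 'v::ab_group_add) \<Rightarrow> ('v \<Rightarrow> 'v \<Rightarrow> 'v \<Rightarrow> 'v) \<Rightarrow> bool" where
  "trilinear s br \<longleftrightarrow>
     (\<forall>y z. Vector_Spaces.linear s s (\<lambda>x. br x y z)) \<and>
     (\<forall>x z. Vector_Spaces.linear s s (\<lambda>y. br x y z)) \<and>
     (\<forall>x y. Vector_Spaces.linear s s (\<lambda>z. br x y z))"

definition lie_triple_system ::
  "('k::field \<Rightarrow> 'v \<Rightarrow> 'v::ab_group_add) \<Rightarrow> ('v \<Rightarrow> 'v \<Rightarrow> 'v \<Rightarrow> 'v) \<Rightarrow> bool" where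
  "lie_triple_system s br \<longleftrightarrow>
     vector_space s \<and> trilinear s br \<and>
     (\<forall>x y. br x x y = 0) \<and>
     (\<forall>x y z. br x y z + br y z x + br z x y = 0) \<and>
     (\<forall>x y z w t. br x y (br z w t) =
        br (br x y z) w t + br z (br x y w) t + br z w (br x y t))"

definition rep_D :: "('g \<Rightarrow> 'g \<Rightarrow> 'w \<Rightarrow> 'w::ab_group_add) \<Rightarrow> 'g \<Rightarrow> 'g \<Rightarrow> 'w \<Rightarrow> 'w" where
  "rep_D \<rho> a b = (\<lambda>w. \<rho> b a w - \<rho> a b w)"

text \<open>Elements of gl(W) are the linear
endomorphisms of W; product is composition, bracket is the commutator.\<close>
definition lts_representation ::
  "('k::field \<Rightarrow> 'g \<Rightarrow> 'g::ab_group_add) \<Rightarrow> ('g \<Rightarrow> 'g \<Rightarrow> 'g \<Rightarrow> 'g) \<Rightarrow>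
   ('k \<Rightarrow> 'w \<Rightarrow> 'w::ab_group_add) \<Rightarrow> ('g \<Rightarrow> 'g \<Rightarrow> 'w \<Rightarrow> 'w) \<Rightarrow> bool" where
  "lts_representation sh br sw \<rho> \<longleftrightarrow>
     vector_space sw \<and>
     (\<forall>a b. Vector_Spaces.linear sw sw (\<rho> a b)) \<and>
     (\<forall>b w. Vector_Spaces.linear sh sw (\<lambda>a. \<rho> a b w)) \<and>
     (\<forall>a w. Vector_Spaces.linear sh sw (\<lambda>b. \<rho> a b w)) \<and>
     (\<forall>a b c d w. \<rho> c d (\<rho> a b w) - \<rho> b d (\<rho> a c w) - \<rho> a (br b c d) w
                 + rep_D \<rho> b c (\<rho> a d w) = 0) \<and>
     (\<forall>a b c d w. \<rho> (br a b c) d w + \<rho> c (br a b d) w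
                 = rep_D \<rho> a b (\<rho> c d w) - \<rho> c d (rep_D \<rho> a b w))"

definition relative_RB ::
  "('k::field \<Rightarrow> 'g \<Rightarrow> 'g::ab_group_add) \<Rightarrow> ('g \<Rightarrow> 'g \<Rightarrow> 'g \<Rightarrow> 'g) \<Rightarrow>
   ('k \<Rightarrow> 'v \<Rightarrow> 'v::ab_group_add) \<Rightarrow> ('g \<Rightarrow> 'g \<Rightarrow> 'v \<Rightarrow> 'v) \<Rightarrow> ('v \<Rightarrow> 'g) \<Rightarrow> bool" where
  "relative_RB sg br sv \<rho> T \<longleftrightarrow>
     Vector_Spaces.linear sv sg T \<and>
     (\<forall>u v w. br (T u) (T v) (T w) =
        T (rep_D \<rho> (T u) (T v) w + \<rho> (T v) (T w) u - \<rho> (T u) (T w) v))"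

definition induced_bracket ::
  "('g \<Rightarrow> 'g \<Rightarrow> 'v \<Rightarrow> 'v::ab_group_add) \<Rightarrow> ('v \<Rightarrow> 'g) \<Rightarrow> 'v \<Rightarrow> 'v \<Rightarrow> 'v \<Rightarrow> 'v" where
  "induced_bracket \<rho> T u v w =
     rep_D \<rho> (T u) (T v) w + \<rho> (T v) (T w) u - \<rho> (T u) (T w) v"

definition induced_rep ::
  "('g \<Rightarrow> 'g \<Rightarrow> 'g \<Rightarrow> 'g::ab_group_add) \<Rightarrow> ('g \<Rightarrow> 'g \<Rightarrow> 'v \<Rightarrow> 'v::ab_group_add) \<Rightarrow>
   ('v \<Rightarrow> 'g) \<Rightarrow> 'v \<Rightarrow> 'v \<Rightarrow> 'g \<Rightarrow> 'g" where
  "induced_rep br \<rho> T u v x =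
     br x (T u) (T v) - T (rep_D \<rho> x (T u) v - \<rho> x (T v) u)"

end

theory Submission
  imports Defs "HOL-Library.Product_Plus"
begin

lemma lin_add: "Vector_Spaces.linear s1 s2 f \<Longrightarrow> f (x + y) = f x + f y"
  by (simp add: module_hom_iff_linear[symmetric] module_hom_def module_hom_axioms_def module_iff_vector_space)
lemma lin_scale: "Vector_Spaces.linear s1 s2 f \<Longrightarrow> f (s1 c x) = s2 c (f x)"
  by (simp add: module_hom_iff_linear[symmetric] module_hom_def module_hom_axioms_def module_iff_vector_space)
lemma lin_diff: "Vector_Spaces.linear s1 s2 f \<Longrightarrow> f (x - y) = f x - f y"
proof -
  assume l: "Vector_Spaces.linear s1 s2 f"
  have "f x = f (x - y) + f y" using lin_add[OF l, of "x - y" y] by simp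
  then show ?thesis by (simp add: algebra_simps)
qed
lemma lin_zero: "Vector_Spaces.linear s1 s2 f \<Longrightarrow> f 0 = 0"
  using lin_diff[of s1 s2 f 0 0] by simp
lemma linI: "vector_space s1 \<Longrightarrow> vector_space s2 \<Longrightarrow> (\<And>x y. f (x + y) = f x + f y)
  \<Longrightarrow> (\<And>c x. f (s1 c x) = s2 c (f x)) \<Longrightarrow> Vector_Spaces.linear s1 s2 f"
  by (simp add: module_hom_iff_linear[symmetric] module_hom_def module_hom_axioms_def module_iff_vector_space)
lemma vs_add: "vector_space s \<Longrightarrow> s c (x + y) = s c x + s c y"
  by (simp add: vector_space_def)
lemma vs_diff: "vector_space s \<Longrightarrow> s c (x - y) = s c x - s c y"
proof -
  assume v: "vector_space s"
  have "s c x = s c (x - y) + s c y" using vs_add[OF v, of c "x - y" y] by simp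
  then show ?thesis by (simp add: algebra_simps)
qed

locale ctx =
  fixes sg :: "'k::field_char_0 \<Rightarrow> 'g \<Rightarrow> 'g::ab_group_add"
    and sv :: "'k \<Rightarrow> 'v \<Rightarrow> 'v::ab_group_add"
    and br :: "'g \<Rightarrow> 'g \<Rightarrow> 'g \<Rightarrow> 'g"
    and \<rho> :: "'g \<Rightarrow> 'g \<Rightarrow> 'v \<Rightarrow> 'v"
    and T :: "'v \<Rightarrow> 'g"
  assumes lts: "lie_triple_system sg br"
    and rep: "lts_representation sg br sv \<rho>"
    and rb: "relative_RB sg br sv \<rho> T"
begin

lemma vsg: "vector_space sg" using lts unfolding lie_triple_system_def by blast
lemma vsv: "vector_space sv" using rep unfolding lts_representation_def by blast
lemma brl1: "Vector_Spaces.linear sg sg (\<lambda>x. br x y z)"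
  using lts by (simp add: lie_triple_system_def trilinear_def)
lemma brl2: "Vector_Spaces.linear sg sg (\<lambda>y. br x y z)"
  using lts by (simp add: lie_triple_system_def trilinear_def)
lemma brl3: "Vector_Spaces.linear sg sg (\<lambda>z. br x y z)"
  using lts by (simp add: lie_triple_system_def trilinear_def)
lemma br_xx: "br x x y = 0" using lts unfolding lie_triple_system_def by blast
lemma br_cyc: "br x y z + br y z x + br z x y = 0" using lts unfolding lie_triple_system_def by blast
lemma br_fund: "br x y (br z w t) =
        br (br x y z) w t + br z (br x y w) t + br z w (br x y t)"
  using lts unfolding lie_triple_system_def by blast
lemma rl_w: "Vector_Spaces.linear sv sv (\<rho> a b)" using rep unfolding lts_representation_def by blast
lemma rl_a: "Vector_Spaces.linear sg sv (\<lambda>a. \<rho> a b w)" using rep unfolding lts_representation_def by blast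
lemma rl_b: "Vector_Spaces.linear sg sv (\<lambda>b. \<rho> a b w)" using rep unfolding lts_representation_def by blast
lemma R1: "\<rho> c d (\<rho> a b w) - \<rho> b d (\<rho> a c w) - \<rho> a (br b c d) w
                 + rep_D \<rho> b c (\<rho> a d w) = 0" using rep unfolding lts_representation_def by blast
lemma R2: "\<rho> (br a b c) d w + \<rho> c (br a b d) w
                 = rep_D \<rho> a b (\<rho> c d w) - \<rho> c d (rep_D \<rho> a b w)"
  using rep unfolding lts_representation_def by blast
lemma Tl: "Vector_Spaces.linear sv sg T" using rb unfolding relative_RB_def by blast
lemma RB: "br (T u) (T v) (T w) =
        T (rep_D \<rho> (T u) (T v) w + \<rho> (T v) (T w) u - \<rho> (T u) (T w) v)"
  using rb unfolding relative_RB_def by blast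

lemmas br_add1 = lin_add[OF brl1] and br_add2 = lin_add[OF brl2] and br_add3 = lin_add[OF brl3]
lemmas br_diff1 = lin_diff[OF brl1] and br_diff2 = lin_diff[OF brl2] and br_diff3 = lin_diff[OF brl3]
lemmas br_sc1 = lin_scale[OF brl1] and br_sc2 = lin_scale[OF brl2] and br_sc3 = lin_scale[OF brl3]
lemmas r_add_w = lin_add[OF rl_w] and r_add_a = lin_add[OF rl_a] and r_add_b = lin_add[OF rl_b]
lemmas r_diff_w = lin_diff[OF rl_w] and r_diff_a = lin_diff[OF rl_a] and r_diff_b = lin_diff[OF rl_b]
lemmas r_sc_w = lin_scale[OF rl_w] and r_sc_a = lin_scale[OF rl_a] and r_sc_b = lin_scale[OF rl_b]
lemmas r_zero_w = lin_zero[OF rl_w]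
lemmas T_add = lin_add[OF Tl] and T_diff = lin_diff[OF Tl] and T_sc = lin_scale[OF Tl]
lemmas sg_add = vs_add[OF vsg] and sg_diff = vs_diff[OF vsg]
lemmas sv_add = vs_add[OF vsv] and sv_diff = vs_diff[OF vsv]

lemma D_add: "rep_D \<rho> a b (u + v) = rep_D \<rho> a b u + rep_D \<rho> a b v"
  by (simp add: rep_D_def r_add_w algebra_simps)
lemma D_diff: "rep_D \<rho> a b (u - v) = rep_D \<rho> a b u - rep_D \<rho> a b v"
  by (simp add: rep_D_def r_diff_w algebra_simps)
lemma D_same: "rep_D \<rho> a a u = 0" by (simp add: rep_D_def)

lemma R1': "\<rho> a (br b c d) w = \<rho> c d (\<rho> a b w) - \<rho> b d (\<rho> a c w) + rep_D \<rho> b c (\<rho> a d w)"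
  using R1[of c d a b w] by (simp add: algebra_simps)
lemma R2': "rep_D \<rho> a b (\<rho> c d w) = \<rho> c d (rep_D \<rho> a b w) + \<rho> (br a b c) d w + \<rho> c (br a b d) w"
  using R2[of a b c d w] by (simp add: algebra_simps)
lemma R3: "rep_D \<rho> x y (rep_D \<rho> z w f) = rep_D \<rho> (br x y z) w f + rep_D \<rho> z (br x y w) f
   + rep_D \<rho> z w (rep_D \<rho> x y f)"
proof -
  have "rep_D \<rho> x y (rep_D \<rho> z w f) = rep_D \<rho> x y (\<rho> w z f) - rep_D \<rho> x y (\<rho> z w f)"
    by (simp add: rep_D_def[of \<rho> z w] D_diff)
  also have "\<dots> = (\<rho> w z (rep_D \<rho> x y f) + \<rho> (br x y w) z f + \<rho> w (br x y z) f)
     - (\<rho> z w (rep_D \<rho> x y f) + \<rho> (br x y z) w f + \<rho> z (br x y w) f)"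
    by (simp add: R2')
  also have "\<dots> = rep_D \<rho> (br x y z) w f + rep_D \<rho> z (br x y w) f
   + rep_D \<rho> z w (rep_D \<rho> x y f)" by (simp add: rep_D_def algebra_simps)
  finally show ?thesis .
qed

definition SB :: "'g \<times> 'v \<Rightarrow> 'g \<times> 'v \<Rightarrow> 'g \<times> 'v \<Rightarrow> 'g \<times> 'v" where
  "SB X Y Z = (br (fst X) (fst Y) (fst Z),
     rep_D \<rho> (fst X) (fst Y) (snd Z) + \<rho> (fst Y) (fst Z) (snd X) - \<rho> (fst X) (fst Z) (snd Y))"

lemma SB_fund: "SB X Y (SB Z W U) = SB (SB X Y Z) W U + SB Z (SB X Y W) U + SB Z W (SB X Y U)"
proof -
  obtain x a where X: "X = (x, a)" by (cases X)
  obtain y b where Y: "Y = (y, b)" by (cases Y)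
  obtain z c where Z: "Z = (z, c)" by (cases Z)
  obtain w e where W: "W = (w, e)" by (cases W)
  obtain t f where U: "U = (t, f)" by (cases U)
  show ?thesis unfolding X Y Z W U SB_def
  proof (simp, intro conjI)
    show "br x y (br z w t) = br (br x y z) w t + br z (br x y w) t + br z w (br x y t)"
      by (rule br_fund)
    show "rep_D \<rho> x y (rep_D \<rho> z w f + \<rho> w t c - \<rho> z t e) + \<rho> y (br z w t) a - \<rho> x (br z w t) b =
    rep_D \<rho> (br x y z) w f + \<rho> w t (rep_D \<rho> x y c + \<rho> y z a - \<rho> x z b) - \<rho> (br x y z) t e +
    (rep_D \<rho> z (br x y w) f + \<rho> (br x y w) t c - \<rho> z t (rep_D \<rho> x y e + \<rho> y w a - \<rho> x w b)) +
    (rep_D \<rho> z w (rep_D \<rho> x y f + \<rho> y t a - \<rho> x t b) + \<rho> w (br x y t) c - \<rho> z (br x y t) e)"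
      by (simp add: r_add_w r_diff_w D_add D_diff R1'[of y] R1'[of x] R2'[of x y] R3[of x y z w] algebra_simps)
  qed
qed


lemma D_add1: "rep_D \<rho> (a + a') b u = rep_D \<rho> a b u + rep_D \<rho> a' b u"
  by (simp add: rep_D_def r_add_a r_add_b algebra_simps)
lemma D_diff1: "rep_D \<rho> (a - a') b u = rep_D \<rho> a b u - rep_D \<rho> a' b u"
  by (simp add: rep_D_def r_diff_a r_diff_b algebra_simps)
lemma D_add2: "rep_D \<rho> a (b + b') u = rep_D \<rho> a b u + rep_D \<rho> a b' u"
  by (simp add: rep_D_def r_add_a r_add_b algebra_simps)
lemma D_sc1: "rep_D \<rho> (sg k a) b u = sv k (rep_D \<rho> a b u)"
  by (simp add: rep_D_def r_sc_a r_sc_b sv_diff)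
lemma D_sc2: "rep_D \<rho> a (sg k b) u = sv k (rep_D \<rho> a b u)"
  by (simp add: rep_D_def r_sc_a r_sc_b sv_diff)
lemma D_sc: "rep_D \<rho> a b (sv k u) = sv k (rep_D \<rho> a b u)"
  by (simp add: rep_D_def r_sc_w sv_diff)

lemma br_skew: "br x y z = - br y x z"
proof -
  have "br x y z + br y x z = br (x + y) (x + y) z"
    by (simp only: br_add1 br_add2 br_xx[of x] br_xx[of y] add_0_left add_0_right add.commute)
  also have "\<dots> = 0" by (rule br_xx)
  finally show ?thesis using eq_neg_iff_add_eq_0 by blast
qed

definition G :: "'v \<Rightarrow> 'g \<times> 'v" where "G u = (T u, u)"
definition pp :: "'g \<times> 'v \<Rightarrow> 'g" where "pp X = fst X - T (snd X)"
lemma fst_G[simp]: "fst (G u) = T u" and snd_G[simp]: "snd (G u) = u" by (simp_all add: G_def)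

lemma pp_add: "pp (P + Q) = pp P + pp Q" by (simp add: pp_def T_add algebra_simps)
lemma pp_diff: "pp (P - Q) = pp P - pp Q" by (simp add: pp_def T_diff algebra_simps)

lemma SB_G: "SB (G u) (G v) (G w) = G (induced_bracket \<rho> T u v w)"
  by (simp add: SB_def G_def induced_bracket_def RB)

lemma ib_fund: "induced_bracket \<rho> T u v (induced_bracket \<rho> T w s t) =
  induced_bracket \<rho> T (induced_bracket \<rho> T u v w) s t + induced_bracket \<rho> T w (induced_bracket \<rho> T u v s) t
  + induced_bracket \<rho> T w s (induced_bracket \<rho> T u v t)"
proof -
  have "SB (G u) (G v) (SB (G w) (G s) (G t)) = SB (SB (G u) (G v) (G w)) (G s) (G t)
     + SB (G w) (SB (G u) (G v) (G s)) (G t) + SB (G w) (G s) (SB (G u) (G v) (G t))"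
    by (rule SB_fund)
  then have "G (induced_bracket \<rho> T u v (induced_bracket \<rho> T w s t)) =
    G (induced_bracket \<rho> T (induced_bracket \<rho> T u v w) s t) + G (induced_bracket \<rho> T w (induced_bracket \<rho> T u v s) t)
  + G (induced_bracket \<rho> T w s (induced_bracket \<rho> T u v t))" by (simp only: SB_G)
  then show ?thesis using arg_cong[of _ _ snd] by (metis snd_G snd_add)
qed

lemma ib_xx: "induced_bracket \<rho> T u u w = 0"
  by (simp add: induced_bracket_def D_same)
lemma ib_cyc: "induced_bracket \<rho> T u v w + induced_bracket \<rho> T v w u + induced_bracket \<rho> T w u v = 0"
  by (simp add: induced_bracket_def rep_D_def algebra_simps)

lemma ib_l1: "Vector_Spaces.linear sv sv (\<lambda>u. induced_bracket \<rho> T u v w)"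
  by (rule linI[OF vsv vsv]) (simp_all add: induced_bracket_def T_add T_sc D_add1 D_sc1 r_add_a r_add_w r_sc_a r_sc_w sv_add sv_diff algebra_simps)
lemma ib_l2: "Vector_Spaces.linear sv sv (\<lambda>v. induced_bracket \<rho> T u v w)"
  by (rule linI[OF vsv vsv]) (simp_all add: induced_bracket_def T_add T_sc D_add2 D_sc2 r_add_a r_add_w r_sc_a r_sc_w sv_add sv_diff algebra_simps)
lemma ib_l3: "Vector_Spaces.linear sv sv (\<lambda>w. induced_bracket \<rho> T u v w)"
  by (rule linI[OF vsv vsv]) (simp_all add: induced_bracket_def T_add T_sc D_add D_sc r_add_b r_add_a r_sc_b r_sc_a sv_add sv_diff algebra_simps)

lemma ir_lx: "Vector_Spaces.linear sg sg (induced_rep br \<rho> T u v)"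
  by (rule linI[OF vsg vsg]) (simp_all add: induced_rep_def br_add1 br_sc1 T_add T_diff T_sc D_add1 D_sc1 r_add_a r_sc_a sv_diff sg_diff sg_add sv_add algebra_simps)
lemma ir_lu: "Vector_Spaces.linear sv sg (\<lambda>u. induced_rep br \<rho> T u v x)"
  by (rule linI[OF vsv vsg]) (simp_all add: induced_rep_def br_add2 br_sc2 T_add T_diff T_sc D_add2 D_sc2 r_add_w r_sc_w sv_diff sg_diff sg_add sv_add algebra_simps)
lemma ir_lv: "Vector_Spaces.linear sv sg (\<lambda>v. induced_rep br \<rho> T u v x)"
  by (rule linI[OF vsv vsg]) (simp_all add: induced_rep_def br_add3 br_sc3 T_add T_diff T_sc D_add D_sc r_add_b r_sc_b sv_diff sg_diff sg_add sv_add algebra_simps)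

lemma K1: "pp (SB X (G u) (G v)) = induced_rep br \<rho> T u v (pp X)"
proof -
  obtain x a where X: "X = (x, a)" by (cases X)
  have A: "pp (SB X (G u) (G v)) = br x (T u) (T v) - T (rep_D \<rho> x (T u) v) - T (\<rho> (T u) (T v) a) + T (\<rho> x (T v) u)"
    by (simp add: X pp_def SB_def T_add T_diff)
  have B: "br (T a) (T u) (T v) = T (rep_D \<rho> (T a) (T u) v) + T (\<rho> (T u) (T v) a) - T (\<rho> (T a) (T v) u)"
    by (simp add: RB T_add T_diff)
  have C: "induced_rep br \<rho> T u v (pp X) = br x (T u) (T v) - br (T a) (T u) (T v)
     - (T (rep_D \<rho> x (T u) v) - T (rep_D \<rho> (T a) (T u) v) - T (\<rho> x (T v) u) + T (\<rho> (T a) (T v) u))"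
    by (simp add: X pp_def induced_rep_def br_diff1 D_diff1 r_diff_a T_diff)
  show ?thesis unfolding A C B by (simp add: algebra_simps)
qed

lemma SB_skew: "SB X Y Z = - SB Y X Z"
  by (simp add: SB_def br_skew[of "fst X"] rep_D_def algebra_simps)

lemma SB_cyc: "SB Y Z X = SB X Z Y - SB X Y Z"
proof -
  have "br (fst Y) (fst Z) (fst X) = br (fst X) (fst Z) (fst Y) - br (fst X) (fst Y) (fst Z)"
    using br_cyc[of "fst X" "fst Y" "fst Z"] br_skew[of "fst Z" "fst X" "fst Y"]
    by (simp add: algebra_simps)
  then show ?thesis by (simp add: SB_def rep_D_def algebra_simps)
qed

lemma K2: "pp (SB (G b) (G c) Y) = induced_rep br \<rho> T c b (pp Y) - induced_rep br \<rho> T b c (pp Y)"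
  by (simp add: SB_cyc[of "G b" "G c" Y] pp_diff K1)

lemma ppX: "pp (x, 0) = x" by (simp add: pp_def lin_zero[OF Tl])

lemma ir_R1: "induced_rep br \<rho> T c d (induced_rep br \<rho> T a b x) - induced_rep br \<rho> T b d (induced_rep br \<rho> T a c x)
   - induced_rep br \<rho> T a (induced_bracket \<rho> T b c d) x
   + rep_D (induced_rep br \<rho> T) b c (induced_rep br \<rho> T a d x) = 0"
proof -
  define X where "X = (x, 0::'v)"
  have f: "SB X (G a) (SB (G b) (G c) (G d)) = SB (SB X (G a) (G b)) (G c) (G d)
     + SB (G b) (SB X (G a) (G c)) (G d) + SB (G b) (G c) (SB X (G a) (G d))" by (rule SB_fund)
  have "SB (SB X (G a) (G b)) (G c) (G d) = SB X (G a) (SB (G b) (G c) (G d))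
     + SB (SB X (G a) (G c)) (G b) (G d) - SB (G b) (G c) (SB X (G a) (G d))"
    using f SB_skew[of "G b" "SB X (G a) (G c)" "G d"] by (simp add: algebra_simps)
  then have "pp (SB (SB X (G a) (G b)) (G c) (G d)) = pp (SB X (G a) (SB (G b) (G c) (G d)))
     + pp (SB (SB X (G a) (G c)) (G b) (G d)) - pp (SB (G b) (G c) (SB X (G a) (G d)))"
    by (simp add: pp_add pp_diff)
  then show ?thesis by (simp add: K1 K2 SB_G X_def ppX rep_D_def algebra_simps)
qed

lemma ir_R2: "induced_rep br \<rho> T (induced_bracket \<rho> T a b c) d x + induced_rep br \<rho> T c (induced_bracket \<rho> T a b d) x
   = rep_D (induced_rep br \<rho> T) a b (induced_rep br \<rho> T c d x) - induced_rep br \<rho> T c d (rep_D (induced_rep br \<rho> T) a b x)"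
proof -
  define X where "X = (x, 0::'v)"
  have f: "SB (G a) (G b) (SB X (G c) (G d)) = SB (SB (G a) (G b) X) (G c) (G d)
     + SB X (SB (G a) (G b) (G c)) (G d) + SB X (G c) (SB (G a) (G b) (G d))" by (rule SB_fund)
  then have "pp (SB (G a) (G b) (SB X (G c) (G d))) = pp (SB (SB (G a) (G b) X) (G c) (G d))
     + pp (SB X (SB (G a) (G b) (G c)) (G d)) + pp (SB X (G c) (SB (G a) (G b) (G d)))"
    by (simp add: pp_add)
  then show ?thesis by (simp add: K1 K2 SB_G X_def ppX rep_D_def lin_diff[OF ir_lx] algebra_simps)
qed

end

theorem corollary5p15:
  fixes sg :: "'k::field_char_0 \<Rightarrow> 'g \<Rightarrow> 'g::ab_group_add"
    and sv :: "'k \<Rightarrow> 'v \<Rightarrow> 'v::ab_group_add"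
    and br :: "'g \<Rightarrow> 'g \<Rightarrow> 'g \<Rightarrow> 'g"
    and \<rho> :: "'g \<Rightarrow> 'g \<Rightarrow> 'v \<Rightarrow> 'v"
    and T :: "'v \<Rightarrow> 'g"
  assumes "lie_triple_system sg br"
    and "lts_representation sg br sv \<rho>"
    and "relative_RB sg br sv \<rho> T"
  shows "lie_triple_system sv (induced_bracket \<rho> T)
     \<and> lts_representation sv (induced_bracket \<rho> T) sg (induced_rep br \<rho> T)"
proof -
  interpret ctx sg sv br \<rho> T using assms by unfold_locales
  show ?thesis
    unfolding lie_triple_system_def trilinear_def lts_representation_def
    by (intro conjI allI vsv vsg ib_l1 ib_l2 ib_l3 ib_xx ib_cyc ib_fund ir_lx ir_lu ir_lv ir_R1 ir_R2)
qed

end
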